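(* Let $Z$ be a real random variable with an $s$-concave distribution for some $s\in(-1/3,0]$, and let $M(Z)=\operatorname{ess\,sup}_{z\in\mathbb{R}}f_Z(z)$ where $f_Z$ is its Lebesgue density. Then $$\frac1{12}\le\mathrm{Var}(Z)M^2(Z)\le\frac{4(1+s)^3}{(1+3s)(1+2s)^2}.$$ The lower bound holds for every real random variable $Z$ with a Lebesgue density and finite variance (not necessarily $s$-concave).
   Context: For $s\in[-\infty,\infty]$, a function $f:\mathbb{R}\to[0,\infty]$ is $s$-concave if for all $x,y$ and $\theta\in[0,1]$, $f(\theta x+(1-\theta)y)\ge(\theta f^s(x)+(1-\theta)f^s(y))^{1/s}$, with the right-hand side interpreted as $f(x)^\theta f(y)^{1-\theta}$ for $s=0$ and $f(x)\wedge f(y)$ for $s=-\infty$. A real random variable has an $s$-concave distribution if it has an $s$-concave density with respect to Lebesgue measure on the affine hull of its support. *)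

theory Defs
  imports "HOL-Probability.Probability"
begin

text \<open>The s-mean of two nonnegative reals with weight theta in (0,1), with the
  standard conventions: for s = 0 it is the geometric mean; for s < 0 it is 0
  as soon as one of the arguments is 0 (since 0 powr s = infinity there).\<close>
definition s_mean :: "real \<Rightarrow> real \<Rightarrow> real \<Rightarrow> real \<Rightarrow> real" where
  "s_mean s \<theta> a b =
     (if s = 0 then a powr \<theta> * b powr (1 - \<theta>)
      else if s < 0 \<and> (a = 0 \<or> b = 0) then 0
      else (\<theta> * a powr s + (1 - \<theta>) * b powr s) powr (1 / s))"

text \<open>s-concavity of a nonnegative function on the real line (real parameter s).
  The endpoint cases theta = 0, 1 are trivial and omitted.\<close>
definition s_concave :: "real \<Rightarrow> (real \<Rightarrow> real) \<Rightarrow> bool" where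
  "s_concave s f \<longleftrightarrow> (\<forall>x. f x \<ge> 0) \<and>
     (\<forall>x y \<theta>. 0 < \<theta> \<and> \<theta> < 1 \<longrightarrow> f (\<theta> * x + (1 - \<theta>) * y) \<ge> s_mean s \<theta> (f x) (f y))"

end

theory Submission
  imports Defs
begin


lemma integral_sq_interval:
  fixes c a :: real assumes "a \<ge> 0"
  shows "(\<integral>\<^sup>+x. ennreal (indicator {c-a..c+a} x * (x-c)^2) \<partial>lborel) = ennreal (2*a^3/3)"
proof -
  have "((\<lambda>x. (x-c)^2) has_integral ((c+a-c)^3/3 - (c-a-c)^3/3)) {c-a..c+a}"
  proof (rule fundamental_theorem_of_calculus)
    show "c - a \<le> c + a" using assms by simp
    fix x assume "x \<in> {c-a..c+a}"
    have "((\<lambda>x. (x-c)^3/3) has_real_derivative (x-c)^2) (at x within {c-a..c+a})"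
      by (auto intro!: derivative_eq_intros simp: power2_eq_square)
    then show "((\<lambda>x. (x-c)^3/3) has_vector_derivative (x-c)^2) (at x within {c-a..c+a})"
      by (simp add: has_real_derivative_iff_has_vector_derivative)
  qed
  then have "((\<lambda>x. (x-c)^2) has_integral (2*a^3/3)) {c-a..c+a}"
    by (simp add: power3_eq_cube algebra_simps)
  from nn_integral_has_integral_lebesgue[OF _ this] show ?thesis by simp
qed

lemma lower_bound_nn:
  fixes f :: "real \<Rightarrow> real" and c V :: real
  assumes f0: "\<And>x. f x \<ge> 0" and fm[measurable]: "f \<in> borel_measurable borel"
    and f1: "(\<integral>\<^sup>+x. ennreal (f x) \<partial>lborel) = 1"
    and V: "(\<integral>\<^sup>+x. ennreal (f x * (x-c)^2) \<partial>lborel) = ennreal V" and V0: "V \<ge> 0"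
  shows "ereal (1/12) \<le> ereal V * (esssup lborel (\<lambda>x. ereal (f x)))\<^sup>2"
proof -
  define E where "E = esssup lborel (\<lambda>x. ereal (f x))"
  have AE: "AE x in lborel. ereal (f x) \<le> E" unfolding E_def by (rule esssup_AE)
  have Epos: "E > 0"
  proof (rule ccontr)
    assume "\<not> E > 0"
    then have "AE x in lborel. f x = 0" using AE f0
      by (auto elim!: eventually_mono simp: not_less) (metis ereal_less_eq(3) antisym order_trans zero_ereal_def)
    then have "(\<integral>\<^sup>+x. ennreal (f x) \<partial>lborel) = 0"
      by (subst nn_integral_cong_AE[where v="\<lambda>x. 0"]) (auto elim!: eventually_mono)
    with f1 show False by simp
  qed
  show ?thesis
  proof (cases E)
    case PInf
    have "V \<noteq> 0"
    proof
      assume "V = 0"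
      then have "AE x in lborel. ennreal (f x * (x-c)^2) = 0"
        using V by (subst nn_integral_0_iff_AE[symmetric]) auto
      moreover have "AE x in lborel. x \<noteq> c" by (rule AE_lborel_singleton)
      ultimately have "AE x in lborel. f x = 0"
      proof eventually_elim
        case (elim x)
        then have "(x-c)^2 > 0" by simp
        moreover have "f x * (x-c)^2 \<le> 0" using elim by (simp add: ennreal_eq_0_iff)
        ultimately show "f x = 0" using f0[of x]
          by (metis antisym mult_pos_pos not_le order_le_less)
      qed
      then have "(\<integral>\<^sup>+x. ennreal (f x) \<partial>lborel) = 0"
        by (subst nn_integral_cong_AE[where v="\<lambda>x. 0"]) (auto elim!: eventually_mono)
      with f1 show False by simp
    qed
    with V0 have "V > 0" by simp
    then show ?thesis using PInf by (simp add: E_def[symmetric] power2_eq_square)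
  next
    case MInf with Epos show ?thesis by simp
  next
    case (real m)
    with Epos have m0: "m > 0" by simp
    define a where "a = 1/(2*m)"
    have a0: "a > 0" using m0 by (simp add: a_def)
    have AEm: "AE x in lborel. f x \<le> m" using AE real by auto
    have pt: "AE x in lborel. ennreal (a^2 * f x + m * (indicator {c-a..c+a} x * (x-c)^2))
               \<le> ennreal (f x * (x-c)^2 + m * a^2 * indicator {c-a..c+a} x)"
    proof (rule eventually_mono[OF AEm], rule ennreal_leI)
      fix x assume fx: "f x \<le> m"
      show "a^2 * f x + m * (indicator {c-a..c+a} x * (x-c)^2) \<le> f x * (x-c)^2 + m * a^2 * indicator {c-a..c+a} x"
      proof (cases "x \<in> {c-a..c+a}")
        case True
        then have "(x-c)^2 \<le> a^2" using a0 by (auto intro!: power2_le_iff_abs_le[THEN iffD2])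
        then have "0 \<le> (m - f x) * (a^2 - (x-c)^2)" using fx by simp
        then show ?thesis using True by (simp add: algebra_simps)
      next
        case False
        then have "a^2 \<le> (x-c)^2" using a0 by (auto intro!: power2_le_iff_abs_le[THEN iffD2] abs_le_square_iff[THEN iffD1]) 
        then have "a^2 * f x \<le> f x * (x-c)^2" using f0[of x] by (simp add: mult.commute mult_left_mono)
        then show ?thesis using False by simp
      qed
    qed
    have sq': "(\<integral>\<^sup>+x. ennreal (indicator {c-a..c+a} x) * ennreal ((x-c)^2) \<partial>lborel) = ennreal (2*a^3/3)"
      using integral_sq_interval[of a c] a0 by (simp add: ennreal_mult)
    have L: "(\<integral>\<^sup>+x. ennreal (a^2 * f x + m * (indicator {c-a..c+a} x * (x-c)^2)) \<partial>lborel)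
        = ennreal (a^2) + ennreal m * ennreal (2*a^3/3)"
      using f0 m0 a0
      by (simp add: nn_integral_add ennreal_mult nn_integral_cmult f1 sq' ennreal_plus[symmetric])
    have V': "(\<integral>\<^sup>+x. ennreal (f x) * ennreal ((x-c)^2) \<partial>lborel) = ennreal V"
      using V f0 by (simp add: ennreal_mult)
    have R: "(\<integral>\<^sup>+x. ennreal (f x * (x-c)^2 + m * a^2 * indicator {c-a..c+a} x) \<partial>lborel)
        = ennreal V + ennreal (m * a^2) * ennreal (2*a)"
      using f0 m0 a0
      by (simp add: nn_integral_add ennreal_mult nn_integral_cmult V' ennreal_plus[symmetric] ennreal_indicator)
    have "ennreal (a^2) + ennreal m * ennreal (2*a^3/3) \<le> ennreal V + ennreal (m * a^2) * ennreal (2*a)"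
      using nn_integral_mono_AE[OF pt] L R by simp
    then have "a^2 + m * (2*a^3/3) \<le> V + m*a^2*(2*a)"
      using m0 a0 V0 by (simp add: ennreal_mult[symmetric] ennreal_plus[symmetric] del: ennreal_plus)
    then have "1/12 \<le> V * m^2" using m0 unfolding a_def
      by (simp add: field_simps power2_eq_square power3_eq_cube)
    then show ?thesis using real by (simp add: E_def[symmetric])
  qed
qed


lemma powr_k: fixes x s :: real assumes "0 \<le> x" "k > 0" shows "x powr (real k * s) = (x powr s)^k"
proof (cases "x = 0")
  case True then show ?thesis using assms(2) by (cases k) auto
next
  case False
  then have "0 < x" using assms by simp
  then have "(x powr s)^k = (x powr s) powr (real k)" by (simp add: powr_realpow)
  also have "\<dots> = x powr (real k * s)" by (simp add: powr_powr mult.commute)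
  finally show ?thesis by simp
qed

lemma J_id: fixes s :: real assumes "-1/3 < s"
  shows "1/(1+3* s) - 3/(1+2* s) + 3/(1+s) - 1 = -6* s^3/((1+s)*(1+2* s)*(1+3* s))"
proof -
  have "1+s \<noteq> 0" "1+2* s \<noteq> 0" "1+3* s \<noteq> 0" using assms by auto
  then show ?thesis apply (simp add: divide_simps) apply algebra done
qed

lemma psi_int:
  fixes s M :: real
  assumes s: "-1/3 < s" "s < 0" and M: "M > 0"
  defines "m \<equiv> M powr s"
  defines "\<kappa> \<equiv> (1+s) / ((-s) * (M * m))"
  shows "((\<lambda>y. \<kappa> * (y powr s - m)) has_integral 1) {0<..<M}"
    and "((\<lambda>y. (\<kappa> * (y powr s - m))^3) has_integral (6*(1+s)^2/((1+2* s)*(1+3* s)*M^2))) {0<..<M}"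
proof -
  have m0: "m > 0" using M by (simp add: m_def)
  have Mk: "M powr (real k * s + 1) = M * m^k" if "k > 0" for k
    using powr_k[of M k s] M that by (simp add: powr_add m_def)
  have i1: "((\<lambda>y. y powr s) has_integral (M * m / (s+1))) {0..M}"
    using has_integral_powr_from_0[of s M] s M Mk[of 1] by (simp add: add.commute)
  have i2: "((\<lambda>y. y powr (2* s)) has_integral (M * m^2 / (2* s+1))) {0..M}"
    using has_integral_powr_from_0[of "2* s" M] s M Mk[of 2] by (simp add: add.commute)
  have i3: "((\<lambda>y. y powr (3* s)) has_integral (M * m^3 / (3* s+1))) {0..M}"
    using has_integral_powr_from_0[of "3* s" M] s M Mk[of 3] by (simp add: add.commute)
  have i0: "((\<lambda>y. c) has_integral (M * c)) {0..M}" for c :: real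
    using has_integral_const_real[of c 0 M] M by simp
  have sne: "s \<noteq> 0" "1+s \<noteq> 0" "1+2* s \<noteq> 0" "1+3* s \<noteq> 0" using s by auto
  have "((\<lambda>y. \<kappa> * (y powr s - m)) has_integral (\<kappa> * (M * m / (s+1) - M * m))) {0..M}"
    by (intro has_integral_mult_right has_integral_diff i1 i0)
  moreover have "\<kappa> * (M * m / (s+1) - M * m) = 1"
  proof -
    have "M * m / (s+1) - M * m = ((-s) * (M * m)) / (1+s)" using sne by (simp add: field_simps)
    moreover have "(-s) * (M * m) \<noteq> 0" using sne M m0 by simp
    ultimately show ?thesis using sne by (simp add: \<kappa>_def) (simp add: divide_simps)
  qed
  ultimately show "((\<lambda>y. \<kappa> * (y powr s - m)) has_integral 1) {0<..<M}"
    by (simp add: has_integral_Icc_iff_Ioo)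
  have eq: "(\<kappa> * (y powr s - m))^3
      = \<kappa>^3 * (y powr (3* s) - 3 * m * y powr (2* s) + 3 * m^2 * y powr s - m^3)" if "0 \<le> y" for y
  proof -
    have "y powr (3* s) = (y powr s)^3" "y powr (2* s) = (y powr s)^2"
      using powr_k[OF that, of 3 s] powr_k[OF that, of 2 s] by simp_all
    then show ?thesis by (simp add: power3_eq_cube power2_eq_square algebra_simps)
  qed
  define V where "V = \<kappa>^3 * (M * m^3 / (3* s+1) - 3 * m * (M * m^2 / (2* s+1)) + 3 * m^2 * (M * m / (s+1)) - M * m^3)"
  have "((\<lambda>y. \<kappa>^3 * (y powr (3* s) - 3 * m * y powr (2* s) + 3 * m^2 * y powr s - m^3)) has_integral V) {0..M}"
    unfolding V_def
    by (intro has_integral_mult_right has_integral_diff has_integral_add i3 i2 i1 i0)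
  then have h3: "((\<lambda>y. (\<kappa> * (y powr s - m))^3) has_integral V) {0..M}"
    by (rule has_integral_eq[rotated]) (simp add: eq)
  have "V = \<kappa>^3 * (M * m^3) * (1/(1+3* s) - 3/(1+2* s) + 3/(1+s) - 1)"
    by (simp add: V_def algebra_simps power3_eq_cube power2_eq_square)
  also have "\<dots> = \<kappa>^3 * (M * m^3) * (-6* s^3/((1+s)*(1+2* s)*(1+3* s)))"
    using J_id[OF s(1)] by simp
  also have "\<dots> = 6*(1+s)^2/((1+2* s)*(1+3* s)*M^2)"
    using sne M m0 unfolding \<kappa>_def apply (simp add: divide_simps) apply algebra done
  finally show "((\<lambda>y. (\<kappa> * (y powr s - m))^3) has_integral (6*(1+s)^2/((1+2* s)*(1+3* s)*M^2))) {0<..<M}"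
    using h3 by (simp add: has_integral_Icc_iff_Ioo)
qed


locale sc =
  fixes s :: real and f :: "real \<Rightarrow> real"
  assumes s_gt: "-1/3 < s" and s_neg: "s < 0"
    and f0: "\<And>x. f x \<ge> 0" and fm[measurable]: "f \<in> borel_measurable borel"
    and f1: "(\<integral>\<^sup>+x. ennreal (f x) \<partial>lborel) = 1"
    and conc: "s_concave s f"
begin

definition I :: "real \<Rightarrow> real set" where "I y = {x. y < f x}"
definition L :: "real \<Rightarrow> real" where "L y = measure lborel (I y)"
definition pm :: "real \<Rightarrow> real \<Rightarrow> real \<Rightarrow> real" where
  "pm \<theta> a b = (\<theta> * a powr s + (1-\<theta>) * b powr s) powr (1/s)"

lemma I_meas'[measurable]: "I y \<in> sets borel"
  unfolding I_def by measurable
lemma I_meas[measurable, simp]: "I y \<in> sets lborel"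
  using I_meas' by simp

lemma conc': assumes "f x > 0" "f z > 0" "0 < \<theta>" "\<theta> < 1"
  shows "f (\<theta> * x + (1-\<theta>) * z) \<ge> pm \<theta> (f x) (f z)"
proof -
  have "0 < \<theta> \<and> \<theta> < 1 \<longrightarrow> f (\<theta> * x + (1-\<theta>) * z) \<ge> s_mean s \<theta> (f x) (f z)"
    using conc unfolding s_concave_def by blast
  then show ?thesis using assms s_neg unfolding s_mean_def pm_def by auto
qed

lemma pm_strict: assumes "0 < y1" "y1 < a" "0 < y2" "y2 < b" "0 < \<theta>" "\<theta> < 1"
  shows "pm \<theta> y1 y2 < pm \<theta> a b"
proof -
  have 1: "a powr s < y1 powr s" "b powr s < y2 powr s"
    using assms s_neg by (auto intro!: powr_less_mono2_neg)
  have "\<theta> * a powr s + (1-\<theta>) * b powr s < \<theta> * y1 powr s + (1-\<theta>) * y2 powr s"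
    using 1 assms by (intro add_less_le_mono mult_strict_left_mono mult_left_mono) auto
  moreover have "0 < \<theta> * a powr s + (1-\<theta>) * b powr s"
    using assms by (intro add_pos_nonneg) auto
  ultimately show ?thesis unfolding pm_def using s_neg
    by (intro powr_less_mono2_neg) auto
qed

lemma pm_same: assumes "0 < y" shows "pm \<theta> y y = y"
  using assms s_neg by (simp add: pm_def algebra_simps powr_powr)

lemma pm_pos: assumes "0 < y1" "0 < y2" "0 < \<theta>" "\<theta> < 1" shows "0 < pm \<theta> y1 y2"
proof -
  have "0 < \<theta> * y1 powr s + (1-\<theta>) * y2 powr s"
    using assms by (intro add_pos_nonneg) auto
  then show ?thesis unfolding pm_def by simp
qed

lemma I_between: assumes "0 < y" "u \<in> I y" "w \<in> I y" "u \<le> z" "z \<le> w"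
  shows "z \<in> I y"
proof (cases "z = u \<or> z = w")
  case True then show ?thesis using assms by auto
next
  case False
  then have uz: "u < z" "z < w" using assms by auto
  define \<theta> where "\<theta> = (w - z) / (w - u)"
  have th: "0 < \<theta>" "\<theta> < 1" using uz by (auto simp: \<theta>_def field_simps)
  have e: "\<theta>*(w-u) = w-z" using uz by (simp add: \<theta>_def)
  have z: "z = \<theta> * u + (1-\<theta>) * w"
  proof -
    have "\<theta>*u + (1-\<theta>)*w = w - \<theta>*(w-u)" by (simp add: algebra_simps)
    then show ?thesis using e by simp
  qed
  have fu: "y < f u" "y < f w" using assms by (auto simp: I_def)
  have "y = pm \<theta> y y" using pm_same assms by simp
  also have "\<dots> < pm \<theta> (f u) (f w)" using pm_strict fu th assms by simp
  also have "\<dots> \<le> f z" unfolding z using conc' fu th assms by simp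
  finally show ?thesis by (simp add: I_def)
qed

lemma I_emeasure: assumes "0 < y" shows "emeasure lborel (I y) \<le> ennreal (1/y)"
proof -
  have "(\<integral>\<^sup>+x. ennreal y * indicator (I y) x \<partial>lborel) \<le> (\<integral>\<^sup>+x. ennreal (f x) \<partial>lborel)"
    by (intro nn_integral_mono) (auto simp: I_def indicator_def intro!: ennreal_leI)
  then have "ennreal y * emeasure lborel (I y) \<le> 1" using f1 by (simp add: nn_integral_cmult)
  moreover have e1: "ennreal (1/y) * ennreal y = 1" using assms by (simp add: ennreal_mult[symmetric])
  ultimately have "ennreal (1/y) * (ennreal y * emeasure lborel (I y)) \<le> ennreal (1/y) * 1"
    by (intro mult_left_mono) auto
  then show ?thesis by (simp add: mult.assoc[symmetric] e1)
qed

lemma I_fin: assumes "0 < y" shows "I y \<in> fmeasurable lborel"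
proof (rule fmeasurableI)
  show "emeasure lborel (I y) < \<infinity>"
    using le_less_trans[OF I_emeasure[OF assms] ennreal_less_top] by simp
qed simp

lemma I_bdd: assumes "0 < y" "I y \<noteq> {}" shows "bdd_above (I y)" "bdd_below (I y)"
proof -
  obtain x0 where x0: "x0 \<in> I y" using assms by auto
  obtain n :: nat where n: "1/y < real n" using reals_Archimedean2 by blast
  have big: False if sub: "S \<subseteq> I y" and "emeasure lborel S \<ge> ennreal (real n)" for S
  proof -
    have "ennreal (real n) \<le> emeasure lborel (I y)" using that emeasure_mono[OF sub I_meas] by (meson order.trans)
    also have "\<dots> \<le> ennreal (1/y)" using I_emeasure assms by simp
    finally have "real n \<le> 1/y" using assms by (subst (asm) ennreal_le_iff) auto
    then show False using n by simp
  qed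
  show "bdd_above (I y)"
  proof (rule ccontr)
    assume nb: "\<not> bdd_above (I y)"
    have "{x0..x0 + real n} \<subseteq> I y"
    proof
      fix z assume z: "z \<in> {x0..x0 + real n}"
      from nb obtain w where "w \<in> I y" "z < w" unfolding bdd_above_def by (meson not_le)
      then show "z \<in> I y" using I_between[OF assms(1) x0] z by auto
    qed
    moreover have "emeasure lborel {x0..x0 + real n} = ennreal (real n)" by simp
    ultimately show False using big[of "{x0..x0 + real n}"] by simp
  qed
  show "bdd_below (I y)"
  proof (rule ccontr)
    assume nb: "\<not> bdd_below (I y)"
    have "{x0 - real n..x0} \<subseteq> I y"
    proof
      fix z assume z: "z \<in> {x0 - real n..x0}"
      from nb obtain w where "w \<in> I y" "w < z" unfolding bdd_below_def by (meson not_le)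
      then show "z \<in> I y" using I_between[OF assms(1) _ x0] z by auto
    qed
    moreover have "emeasure lborel {x0 - real n..x0} = ennreal (real n)" by simp
    ultimately show False using big[of "{x0 - real n..x0}"] by simp
  qed
qed

definition a :: "real \<Rightarrow> real" where "a y = Inf (I y)"
definition b :: "real \<Rightarrow> real" where "b y = Sup (I y)"

lemma I_interval: assumes "0 < y" "I y \<noteq> {}"
  shows "{a y<..<b y} \<subseteq> I y" "I y \<subseteq> {a y..b y}" "a y \<le> b y" "L y = b y - a y"
proof -
  note bd = I_bdd[OF assms]
  show sub1: "{a y<..<b y} \<subseteq> I y"
  proof
    fix z assume z: "z \<in> {a y<..<b y}"
    obtain u where u: "u \<in> I y" "u < z" using z cInf_less_iff[OF assms(2) bd(2)] by (auto simp: a_def)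
    obtain w where w: "w \<in> I y" "z < w" using z less_cSup_iff[OF assms(2) bd(1)] by (auto simp: b_def)
    show "z \<in> I y" by (rule I_between[OF assms(1) u(1) w(1)]) (use u w in auto)
  qed
  show sub2: "I y \<subseteq> {a y..b y}"
  proof
    fix x assume x: "x \<in> I y"
    show "x \<in> {a y..b y}" using cInf_lower[OF x bd(2)] cSup_upper[OF x bd(1)] by (simp add: a_def b_def)
  qed
  obtain x where x: "x \<in> I y" using assms(2) by blast
  show ab: "a y \<le> b y" using sub2 x by (meson atLeastAtMost_iff order.trans subsetD)
  have "emeasure lborel {a y<..<b y} \<le> emeasure lborel (I y)" by (rule emeasure_mono[OF sub1]) simp
  moreover have "emeasure lborel (I y) \<le> emeasure lborel {a y..b y}" by (rule emeasure_mono[OF sub2]) simp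
  ultimately have "emeasure lborel (I y) = ennreal (b y - a y)" using ab by (simp add: antisym)
  then show "L y = b y - a y" using ab by (simp add: L_def measure_def)
qed

lemma L_nonneg: "L y \<ge> 0" by (simp add: L_def)

lemma K: assumes y1: "0 < y1" "I y1 \<noteq> {}" and y2: "0 < y2" "I y2 \<noteq> {}" and th: "0 < \<theta>" "\<theta> < 1"
  shows "L (pm \<theta> y1 y2) \<ge> \<theta> * L y1 + (1-\<theta>) * L y2"
proof -
  define y where "y = pm \<theta> y1 y2"
  have y0: "0 < y" using pm_pos y1 y2 th by (simp add: y_def)
  note i1 = I_interval[OF y1] and i2 = I_interval[OF y2]
  define D where "D = \<theta> * (b y1 - a y1) + (1-\<theta>) * (b y2 - a y2)"
  define p where "p = \<theta> * a y1 + (1-\<theta>) * a y2"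
  have D0: "D \<ge> 0" unfolding D_def using i1(3) i2(3) th by (intro add_nonneg_nonneg mult_nonneg_nonneg) auto
  show ?thesis
  proof (cases "D = 0")
    case True
    then show ?thesis using i1(4) i2(4) L_nonneg[of y] by (simp add: D_def y_def)
  next
    case False
    with D0 have Dp: "D > 0" by simp
    have sub: "{p<..<p+D} \<subseteq> I y"
    proof
      fix z assume z: "z \<in> {p<..<p+D}"
      define t where "t = (z - p) / D"
      have t: "0 < t" "t < 1" using z Dp by (auto simp: t_def field_simps)
      define x1 where "x1 = a y1 + t * (b y1 - a y1)"
      define x2 where "x2 = a y2 + t * (b y2 - a y2)"
      have mem: "x \<in> I yy" if h: "0 < yy" "I yy \<noteq> {}" "x = a yy + t * (b yy - a yy)" for x yy
      proof (cases "a yy < b yy")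
        case True
        have d1: "0 < t * (b yy - a yy)" using True t by simp
        have d2: "t * (b yy - a yy) < 1 * (b yy - a yy)" using True t by (intro mult_strict_right_mono) auto
        have "a yy < x" "x < b yy" using d1 d2 h(3) by auto
        then show ?thesis using I_interval(1)[OF h(1,2)] by auto
      next
        case False
        then have "a yy = b yy" using I_interval(3)[OF h(1,2)] by simp
        then have "x = a yy" using h(3) by simp
        moreover obtain w where "w \<in> I yy" using h(2) by auto
        ultimately show ?thesis using I_interval(2)[OF h(1,2)] \<open>a yy = b yy\<close> by auto
      qed
      have m1: "x1 \<in> I y1" using mem[OF y1] x1_def by simp
      have m2: "x2 \<in> I y2" using mem[OF y2] x2_def by simp
      have e1: "\<theta> * x1 + (1-\<theta>) * x2 = p + t * D"
        by (simp add: x1_def x2_def p_def D_def algebra_simps)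
      have e2: "t * D = z - p" using Dp by (simp add: t_def)
      have zeq: "z = \<theta> * x1 + (1-\<theta>) * x2" using e1 e2 by simp
      have f12: "y1 < f x1" "y2 < f x2" using m1 m2 by (auto simp: I_def)
      have "y < pm \<theta> (f x1) (f x2)" unfolding y_def by (rule pm_strict) (use f12 y1 y2 th in auto)
      also have "\<dots> \<le> f (\<theta> * x1 + (1-\<theta>) * x2)" by (rule conc') (use f12 y1 y2 th in auto)
      also have "\<dots> = f z" using zeq by simp
      finally show "z \<in> I y" by (simp add: I_def)
    qed
    have "measure lborel {p<..<p+D} \<le> measure lborel (I y)"
      using measure_mono_fmeasurable[OF sub _ I_fin[OF y0]] by simp
    then have "D \<le> L y" using Dp by (simp add: L_def measure_def)
    then show ?thesis using i1(4) i2(4) by (simp add: D_def y_def)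
  qed
qed

lemma emeasure_I: assumes "0 < y" shows "emeasure lborel (I y) = ennreal (L y)"
  unfolding L_def using I_fin[OF assms] by (intro emeasure_eq_ennreal_measure) (simp add: fmeasurable_def)

lemma layer:
  assumes g[measurable]: "g \<in> borel_measurable borel"
  shows "(\<integral>\<^sup>+x. ennreal (f x) * g x \<partial>lborel)
       = (\<integral>\<^sup>+y. indicator {0<..} y * (\<integral>\<^sup>+x. indicator (I y) x * g x \<partial>lborel) \<partial>lborel)"
proof -
  have 1: "ennreal (f x) = (\<integral>\<^sup>+y. indicator {0<..<f x} y \<partial>lborel)" for x
    using f0[of x] by simp
  have "(\<integral>\<^sup>+x. ennreal (f x) * g x \<partial>lborel) = (\<integral>\<^sup>+x. (\<integral>\<^sup>+y. indicator {0<..<f x} y * g x \<partial>lborel) \<partial>lborel)"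
    by (subst 1) (simp add: nn_integral_multc)
  also have "\<dots> = (\<integral>\<^sup>+y. (\<integral>\<^sup>+x. indicator {0<..<f x} y * g x \<partial>lborel) \<partial>lborel)"
  proof (rule lborel_pair.Fubini'[symmetric])
    have "(\<lambda>p::real\<times>real. indicator {0<..<f (fst p)} (snd p) * g (fst p) :: ennreal)
        = (\<lambda>p. indicator {p. 0 < snd p \<and> snd p < f (fst p)} p * g (fst p))"
      by (auto simp: indicator_def fun_eq_iff)
    moreover have "(\<lambda>p::real\<times>real. indicator {p. 0 < snd p \<and> snd p < f (fst p)} p * g (fst p) :: ennreal)
        \<in> borel_measurable (lborel \<Otimes>\<^sub>M lborel)"
      by measurable
    ultimately show "(\<lambda>(x, y). indicator {0<..<f x} y * g x) \<in> borel_measurable (lborel \<Otimes>\<^sub>M lborel)"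
      by (simp add: case_prod_unfold)
  qed
  also have "\<dots> = (\<integral>\<^sup>+y. indicator {0<..} y * (\<integral>\<^sup>+x. indicator (I y) x * g x \<partial>lborel) \<partial>lborel)"
  proof (rule nn_integral_cong)
    fix y :: real
    have "(\<integral>\<^sup>+x. indicator {0<..<f x} y * g x \<partial>lborel) = (\<integral>\<^sup>+x. indicator {0<..} y * (indicator (I y) x * g x) \<partial>lborel)"
      by (rule nn_integral_cong) (auto simp: indicator_def I_def)
    also have "\<dots> = indicator {0<..} y * (\<integral>\<^sup>+x. indicator (I y) x * g x \<partial>lborel)"
      by (rule nn_integral_cmult) measurable
    finally show "(\<integral>\<^sup>+x. indicator {0<..<f x} y * g x \<partial>lborel) = indicator {0<..} y * (\<integral>\<^sup>+x. indicator (I y) x * g x \<partial>lborel)" .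
  qed
  finally show ?thesis .
qed

lemma mass: "(\<integral>\<^sup>+y. indicator {0<..} y * emeasure lborel (I y) \<partial>lborel) = 1"
  using layer[of "\<lambda>x. 1"] f1 by simp

definition E :: ereal where "E = esssup lborel (\<lambda>x. ereal (f x))"

lemma E_below: assumes "0 < y" "ereal y < E" shows "I y \<noteq> {}" "L y > 0"
proof -
  have "emeasure lborel {x \<in> space lborel. ereal y < ereal (f x)} > 0"
    using assms unfolding E_def by (intro esssup_pos_measure) measurable
  then have e: "emeasure lborel (I y) > 0" by (simp add: I_def)
  then show "I y \<noteq> {}" by auto
  show "L y > 0" using e emeasure_I[OF assms(1)] by simp
qed

lemma E_above: assumes "E \<le> ereal y" shows "emeasure lborel (I y) = 0"
proof -
  have "emeasure lborel {x \<in> space lborel. E < ereal (f x)} = 0"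
    unfolding E_def by (rule esssup_zero_measure)
  moreover have sub: "I y \<subseteq> {x \<in> space lborel. E < ereal (f x)}"
  proof
    fix x assume "x \<in> I y"
    then have "ereal y < ereal (f x)" by (simp add: I_def)
    then show "x \<in> {x \<in> space lborel. E < ereal (f x)}" using le_less_trans[OF assms] by simp
  qed
  moreover have m: "{x \<in> space lborel. E < ereal (f x)} \<in> sets lborel" by measurable
  ultimately show ?thesis using emeasure_mono[OF sub m] by (simp only: le_zero_eq)
qed

lemma E_pos: "E > 0"
proof (rule ccontr)
  assume "\<not> E > 0"
  then have e0: "\<And>y. 0 < y \<Longrightarrow> emeasure lborel (I y) = 0"
    by (intro E_above) (auto simp: not_less intro: order.trans)
  have "(\<integral>\<^sup>+y. indicator {0<..} y * emeasure lborel (I y) \<partial>lborel) = (\<integral>\<^sup>+(y::real). 0 \<partial>lborel)"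
  proof (intro nn_integral_cong)
    fix y :: real
    show "indicator {0<..} y * emeasure lborel (I y) = 0"
      using e0[of y] by (cases "0 < y") (auto simp: indicator_def)
  qed
  then show False using mass by simp
qed

lemma powr_int_has:
  fixes T r :: real
  assumes "1 \<le> T" "r > 0"
  shows "((\<lambda>y. y powr (r - 1)) has_integral (T powr r / r - 1 / r)) {1..T}"
proof -
  have "((\<lambda>y. y powr (r - 1)) has_integral ((\<lambda>y. y powr r / r) T - (\<lambda>y. y powr r / r) 1)) {1..T}"
  proof (rule fundamental_theorem_of_calculus[where f="\<lambda>y::real. y powr r / r"])
    show "1 \<le> T" using assms by simp
    fix x :: real assume x: "x \<in> {1..T}"
    have "((\<lambda>y. y powr r / r) has_real_derivative (r * x powr (r - 1) / r)) (at x within {1..T})"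
      using x by (auto intro!: derivative_eq_intros)
    then show "((\<lambda>y. y powr r / r) has_vector_derivative x powr (r - 1)) (at x within {1..T})"
      using assms by (simp add: has_real_derivative_iff_has_vector_derivative)
  qed
  then show ?thesis by simp
qed

lemma E_fin: "E < \<infinity>"
proof (rule ccontr)
  assume "\<not> E < \<infinity>"
  then have Einf: "E = \<infinity>" by (cases E) auto
  have below: "I y \<noteq> {}" "L y > 0" if "0 < y" for y
    using E_below[OF that] Einf by auto
  define L1 where "L1 = L 1"
  have L1: "L1 > 0" using below[of 1] by (simp add: L1_def)
  have lb: "L y \<ge> (L1/2) * y powr s" if y1: "1 \<le> y" for y
  proof (cases "y = 1")
    case True then show ?thesis using L1 by (simp add: L1_def)
  next
    case False
    with y1 have y1: "1 < y" by simp
    define Y where "Y = y * 2 powr (-1/s)"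
    have Y0: "0 < Y" using y1 by (simp add: Y_def)
    have "Y powr s = y powr s * (2 powr (-1/s)) powr s"
      unfolding Y_def using y1 powr_mult[of y "2 powr (-1/s)" s] by simp
    also have "(2 powr (-1/s)) powr s = 2 powr (-1/s * s)" by (rule powr_powr)
    also have "-1/s * s = -1" using s_neg by simp
    also have "(2::real) powr (-1) = 1/2" by (simp add: powr_minus)
    finally have Ys: "Y powr s = y powr s / 2" by simp
    have ys: "0 < y powr s" "y powr s < 1"
      using y1 powr_less_mono2_neg[OF s_neg, of 1 y] by auto
    define q where "q = y powr s / 2"
    have q: "0 < q" "q < 1/2" using ys by (auto simp: q_def)
    define \<theta> where "\<theta> = q / (1 - q)"
    have e: "\<theta> * (1 - q) = q" using q by (simp add: \<theta>_def)
    have th: "0 < \<theta>" "\<theta> < 1" using q by (auto simp: \<theta>_def field_simps)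
    have thge: "\<theta> \<ge> y powr s / 2"
    proof -
      have "q * (1 - q) \<le> q" using q by (simp add: algebra_simps)
      then have "q * (1-q) \<le> \<theta> * (1-q)" using e by simp
      then show ?thesis using q by (simp add: q_def)
    qed
    have "\<theta> * 1 powr s + (1 - \<theta>) * Y powr s = \<theta> * (1 - q) + q"
    proof -
      have "Y powr s = q" by (simp add: Ys q_def)
      then show ?thesis by (simp add: algebra_simps)
    qed
    then have "\<theta> * 1 powr s + (1 - \<theta>) * Y powr s = y powr s"
      using e by (simp add: q_def)
    then have pmeq: "pm \<theta> 1 Y = y" using y1 s_neg by (simp add: pm_def powr_powr)
    have "\<theta> * L 1 + (1-\<theta>) * L Y \<le> L (pm \<theta> 1 Y)"
      using K[of 1 Y \<theta>] below Y0 th by auto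
    then have "\<theta> * L1 \<le> L y" using pmeq th L_nonneg[of Y]
      by (simp add: L1_def) (smt (verit) mult_nonneg_nonneg)
    moreover have "(y powr s / 2) * L1 \<le> \<theta> * L1" using thge L1 by (simp add: mult_right_mono)
    moreover have "(L1/2) * y powr s = (y powr s / 2) * L1" by simp
    ultimately show ?thesis by linarith
  qed
  define T where "T = (1 + 4 * (1+s) / L1) powr (1/(1+s))"
  have s1: "0 < 1 + s" using s_gt by simp
  have Tp: "T powr (1+s) = 1 + 4 * (1+s) / L1"
    using s1 L1 by (simp add: T_def powr_powr)
  have T1: "1 \<le> T" unfolding T_def using s1 L1 by (intro ge_one_powr_ge_zero) auto
  have hi: "((\<lambda>y. (L1/2) * y powr s) has_integral ((L1/2) * (T powr (1+s) / (1+s) - 1/(1+s)))) {1..T}"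
    by (rule has_integral_mult_right) (use powr_int_has[OF T1 s1] in simp)
  have "(\<integral>\<^sup>+y. indicator {1..T} y * ennreal ((L1/2) * y powr s) \<partial>lborel)
       = (\<integral>\<^sup>+y. ennreal (indicator {1..T} y * ((L1/2) * y powr s)) \<partial>lborel)"
    by (intro nn_integral_cong) (auto simp: indicator_def)
  also have "\<dots> = ennreal ((L1/2) * (T powr (1+s) / (1+s) - 1/(1+s)))"
    using nn_integral_has_integral_lebesgue[OF _ hi] L1 by simp
  also have "(L1/2) * (T powr (1+s) / (1+s) - 1/(1+s)) = 2"
  proof -
    have "T powr (1+s) / (1+s) - 1/(1+s) = (T powr (1+s) - 1) / (1+s)" by (simp add: diff_divide_distrib)
    also have "\<dots> = (4 * (1+s)) / (L1 * (1+s))" using s1 L1 by (simp add: Tp)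
    also have "\<dots> = 4 / L1" using s1 by (intro nonzero_mult_divide_mult_cancel_right) simp
    finally show ?thesis using L1 by simp
  qed
  finally have int2: "(\<integral>\<^sup>+y. indicator {1..T} y * ennreal ((L1/2) * y powr s) \<partial>lborel) = 2" by simp
  have "(\<integral>\<^sup>+y. indicator {1..T} y * ennreal ((L1/2) * y powr s) \<partial>lborel)
      \<le> (\<integral>\<^sup>+y. indicator {0<..} y * emeasure lborel (I y) \<partial>lborel)"
  proof (rule nn_integral_mono)
    fix y :: real
    show "indicator {1..T} y * ennreal ((L1/2) * y powr s) \<le> indicator {0<..} y * emeasure lborel (I y)"
    proof (cases "y \<in> {1..T}")
      case True
      then have "1 \<le> y" by simp
      then show ?thesis using True lb[of y] emeasure_I[of y] by (auto intro!: ennreal_leI)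
    qed simp
  qed
  then show False using int2 mass by simp
qed

definition M :: real where "M = real_of_ereal E"

lemma E_eq: "E = ereal M" and M_pos: "M > 0"
proof -
  show "E = ereal M" using E_fin E_pos unfolding M_def by (cases E) auto
  then show "M > 0" using E_pos by simp
qed

lemma L_zero: assumes "M \<le> y" shows "L y = 0" "emeasure lborel (I y) = 0"
proof -
  show e: "emeasure lborel (I y) = 0" using E_above assms E_eq by simp
  show "L y = 0" using e by (simp add: L_def measure_def)
qed

lemma L_pos: assumes "0 < y" "y < M" shows "I y \<noteq> {}" "L y > 0"
  using E_below[OF assms(1)] assms E_eq by auto

lemma L_anti: assumes "0 < y" "y \<le> y'" shows "L y' \<le> L y"
proof -
  have "I y' \<subseteq> I y" using assms by (auto simp: I_def)
  then show ?thesis unfolding L_def using measure_mono_fmeasurable[OF _ _ I_fin[OF assms(1)]] by simp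
qed

definition \<kappa> :: real where "\<kappa> = (1+s) / ((-s) * (M * M powr s))"
definition \<Psi> :: "real \<Rightarrow> real" where "\<Psi> y = \<kappa> * (y powr s - M powr s)"

lemma kappa_pos: "\<kappa> > 0"
  unfolding \<kappa>_def using s_neg s_gt M_pos by (intro divide_pos_pos mult_pos_pos) auto

lemma Psi_pos: assumes "0 < y" "y < M" shows "\<Psi> y > 0"
proof -
  have "M powr s < y powr s" using powr_less_mono2_neg[OF s_neg] assms by simp
  then show ?thesis using kappa_pos by (simp add: \<Psi>_def)
qed

lemma cone: assumes y: "0 < y" "y < y'" "y' < M" and P: "\<Psi> y \<le> L y" shows "\<Psi> y' \<le> L y'"
proof -
  define g where "g = (\<lambda>y2. (y' powr s - y2 powr s) / (y powr s - y2 powr s))"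
  have step: "g y2 * L y \<le> L y'" if y2: "y' < y2" "y2 < M" for y2
  proof -
    have p: "y2 powr s < y' powr s" "y' powr s < y powr s"
      using powr_less_mono2_neg[OF s_neg] y y2 by auto
    define \<theta> where "\<theta> = g y2"
    have th: "0 < \<theta>" "\<theta> < 1" using p by (auto simp: \<theta>_def g_def divide_less_eq)
    have e: "\<theta> * (y powr s - y2 powr s) = y' powr s - y2 powr s" using p by (simp add: \<theta>_def g_def)
    have "\<theta> * y powr s + (1-\<theta>) * y2 powr s = \<theta> * (y powr s - y2 powr s) + y2 powr s"
      by (simp add: algebra_simps)
    then have "\<theta> * y powr s + (1-\<theta>) * y2 powr s = y' powr s" using e by simp
    then have pmeq: "pm \<theta> y y2 = y'" using y s_neg by (simp add: pm_def powr_powr)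
    have "\<theta> * L y + (1-\<theta>) * L y2 \<le> L (pm \<theta> y y2)"
      by (rule K) (use L_pos[of y] L_pos[of y2] y y2 th in auto)
    moreover have "0 \<le> (1-\<theta>) * L y2" using th L_nonneg[of y2] by simp
    ultimately show ?thesis using pmeq by (simp add: \<theta>_def)
  qed
  have ev: "eventually (\<lambda>y2. g y2 * L y \<le> L y') (at_left M)"
    using eventually_at_left_real[OF y(3)] by eventually_elim (auto intro: step)
  have pM: "M powr s < y' powr s" "y' powr s < y powr s"
    using powr_less_mono2_neg[OF s_neg] y by auto
  have lim: "((\<lambda>y2. g y2 * L y) \<longlongrightarrow> g M * L y) (at_left M)"
    unfolding g_def using M_pos pM by (intro tendsto_intros) auto
  have gM: "g M * L y \<le> L y'"
    by (rule tendsto_le[OF trivial_limit_at_left_real tendsto_const lim ev])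
  have g0: "0 \<le> g M" using pM by (simp add: g_def)
  have "\<Psi> y' = g M * \<Psi> y" using pM by (simp add: \<Psi>_def g_def)
  also have "\<dots> \<le> g M * L y" using P g0 by (rule mult_left_mono)
  finally show ?thesis using gM by simp
qed

definition cc :: real where "cc = Sup (a ` {0<..<M})"

lemma ab_cross: assumes "0 < y" "y < M" "0 < y'" "y' < M" shows "a y \<le> b y'"
proof -
  define z where "z = max y y'"
  have z: "0 < z" "z < M" using assms by (auto simp: z_def)
  have ne: "I z \<noteq> {}" using L_pos[OF z] by simp
  have s1: "I z \<subseteq> I y" "I z \<subseteq> I y'" by (auto simp: I_def z_def)
  have "a y \<le> a z" unfolding a_def
    by (rule cInf_superset_mono[OF ne I_bdd(2)[OF assms(1)] s1(1)]) (use L_pos[of y] assms in auto)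
  also have "\<dots> \<le> b z" using I_interval(3)[OF z(1) ne] .
  also have "\<dots> \<le> b y'" unfolding b_def
    by (rule cSup_subset_mono[OF ne I_bdd(1)[OF assms(3)] s1(2)]) (use L_pos[of y'] assms in auto)
  finally show ?thesis .
qed

lemma cc_bounds: assumes "0 < y" "y < M" shows "a y \<le> cc" "cc \<le> b y"
proof -
  have M2: "0 < M/2" "M/2 < M" using M_pos by auto
  have bdd: "bdd_above (a ` {0<..<M})"
    by (rule bdd_aboveI[where M="b (M/2)"]) (auto intro: ab_cross[OF _ _ M2])
  show "a y \<le> cc" unfolding cc_def by (rule cSup_upper[OF _ bdd]) (use assms in auto)
  show "cc \<le> b y" unfolding cc_def
    by (rule cSup_least) (use M2 in \<open>auto intro: ab_cross[OF _ _ assms]\<close>)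
qed

lemma sq_int: fixes lo hi c :: real assumes "lo \<le> c" "c \<le> hi"
  shows "(\<integral>\<^sup>+x. indicator {lo..hi} x * ennreal ((x-c)^2) \<partial>lborel) = ennreal (((hi-c)^3 + (c-lo)^3)/3)"
proof -
  have "((\<lambda>x. (x-c)^2) has_integral ((\<lambda>x. (x-c)^3/3) hi - (\<lambda>x. (x-c)^3/3) lo)) {lo..hi}"
  proof (rule fundamental_theorem_of_calculus[where f="\<lambda>x::real. (x-c)^3/3"])
    show "lo \<le> hi" using assms by simp
    fix x assume "x \<in> {lo..hi}"
    have "((\<lambda>x. (x-c)^3/3) has_real_derivative (x-c)^2) (at x within {lo..hi})"
      by (auto intro!: derivative_eq_intros simp: power2_eq_square)
    then show "((\<lambda>x. (x-c)^3/3) has_vector_derivative (x-c)^2) (at x within {lo..hi})"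
      by (simp add: has_real_derivative_iff_has_vector_derivative)
  qed
  moreover have "(\<lambda>x. (x-c)^3/3) hi - (\<lambda>x. (x-c)^3/3) lo = ((hi-c)^3 + (c-lo)^3)/3"
  proof -
    have "(lo-c)^3 = -((c-lo)^3)" by algebra
    then show ?thesis by (simp add: add_divide_distrib)
  qed
  ultimately have h: "((\<lambda>x. (x-c)^2) has_integral (((hi-c)^3 + (c-lo)^3)/3)) {lo..hi}" by simp
  have "(\<integral>\<^sup>+x. indicator {lo..hi} x * ennreal ((x-c)^2) \<partial>lborel) = (\<integral>\<^sup>+x. ennreal (indicator {lo..hi} x * (x-c)^2) \<partial>lborel)"
    by (intro nn_integral_cong) (auto simp: indicator_def)
  also have "\<dots> = ennreal (((hi-c)^3 + (c-lo)^3)/3)"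
    using nn_integral_has_integral_lebesgue[OF _ h] by simp
  finally show ?thesis .
qed

lemma cube_ineq: fixes p q :: real assumes "0 \<le> p" "0 \<le> q" shows "p^3 + q^3 \<le> (p+q)^3"
proof -
  have "(p+q)^3 = p^3 + q^3 + 3*p*q*(p+q)" by (simp add: power3_eq_cube algebra_simps)
  moreover have "0 \<le> 3*p*q*(p+q)" using assms by simp
  ultimately show ?thesis by simp
qed

lemma inner: assumes "0 < y" "y < M"
  shows "(\<integral>\<^sup>+x. indicator (I y) x * ennreal ((x - cc)^2) \<partial>lborel) \<le> ennreal (L y ^ 3 / 3)"
proof -
  have ne: "I y \<noteq> {}" using L_pos[OF assms] by simp
  note ii = I_interval[OF assms(1) ne]
  note cb = cc_bounds[OF assms]
  have "(\<integral>\<^sup>+x. indicator (I y) x * ennreal ((x - cc)^2) \<partial>lborel)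
      \<le> (\<integral>\<^sup>+x. indicator {a y..b y} x * ennreal ((x - cc)^2) \<partial>lborel)"
    by (intro nn_integral_mono mult_right_mono) (use ii(2) in \<open>auto simp: indicator_def\<close>)
  also have "\<dots> = ennreal (((b y - cc)^3 + (cc - a y)^3)/3)" using sq_int[OF cb] .
  also have "\<dots> \<le> ennreal (L y ^ 3 / 3)"
  proof (rule ennreal_leI)
    have "(b y - cc)^3 + (cc - a y)^3 \<le> ((b y - cc) + (cc - a y))^3"
      using cb by (intro cube_ineq) auto
    then show "((b y - cc)^3 + (cc - a y)^3)/3 \<le> L y ^ 3 / 3" using ii(4) by simp
  qed
  finally show ?thesis .
qed

lemma inner0: assumes "M \<le> y" shows "(\<integral>\<^sup>+x. indicator (I y) x * g x \<partial>lborel) = 0"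
proof -
  have "I y \<in> null_sets lborel" using L_zero(2)[OF assms] by (simp add: null_sets_def)
  then have "AE x in lborel. x \<notin> I y" by (rule AE_not_in)
  then have "(\<integral>\<^sup>+x. indicator (I y) x * g x \<partial>lborel) = (\<integral>\<^sup>+(x::real). 0 \<partial>lborel)"
    by (intro nn_integral_cong_AE) (auto elim!: eventually_mono)
  then show ?thesis by simp
qed

lemma moment: "(\<integral>\<^sup>+x. ennreal (f x) * ennreal ((x - cc)^2) \<partial>lborel)
    \<le> (\<integral>\<^sup>+y. indicator {0<..<M} y * ennreal (L y ^ 3 / 3) \<partial>lborel)"
proof -
  have "(\<integral>\<^sup>+x. ennreal (f x) * ennreal ((x - cc)^2) \<partial>lborel)
     = (\<integral>\<^sup>+y. indicator {0<..} y * (\<integral>\<^sup>+x. indicator (I y) x * ennreal ((x - cc)^2) \<partial>lborel) \<partial>lborel)"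
    by (rule layer) measurable
  also have "\<dots> \<le> (\<integral>\<^sup>+y. indicator {0<..<M} y * ennreal (L y ^ 3 / 3) \<partial>lborel)"
  proof (rule nn_integral_mono)
    fix y :: real
    show "indicator {0<..} y * (\<integral>\<^sup>+x. indicator (I y) x * ennreal ((x - cc)^2) \<partial>lborel)
        \<le> indicator {0<..<M} y * ennreal (L y ^ 3 / 3)"
    proof (cases "0 < y")
      case True
      show ?thesis
      proof (cases "y < M")
        case True2: True
        then show ?thesis using inner[OF True True2] True by simp
      next
        case False
        then show ?thesis using inner0[of y] by simp
      qed
    qed simp
  qed
  finally show ?thesis .
qed

lemma L_meas[measurable]: "L \<in> borel_measurable borel"
proof -
  have "(\<lambda>y. \<integral>\<^sup>+x. indicator (I y) x \<partial>lborel) \<in> borel_measurable lborel"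
  proof (rule lborel.borel_measurable_nn_integral)
    have "(\<lambda>p::real\<times>real. indicator (I (fst p)) (snd p) :: ennreal) = indicator {p. fst p < f (snd p)}"
      by (auto simp: indicator_def I_def fun_eq_iff)
    moreover have "(indicator {p::real\<times>real. fst p < f (snd p)} :: _ \<Rightarrow> ennreal) \<in> borel_measurable (lborel \<Otimes>\<^sub>M lborel)"
      by measurable
    ultimately show "case_prod (\<lambda>y x. indicator (I y) x :: ennreal) \<in> borel_measurable (lborel \<Otimes>\<^sub>M lborel)"
      by (simp add: case_prod_unfold)
  qed
  then have "(\<lambda>y. emeasure lborel (I y)) \<in> borel_measurable borel" by simp
  then have "(\<lambda>y. enn2real (emeasure lborel (I y))) \<in> borel_measurable borel" by measurable
  moreover have "L = (\<lambda>y. enn2real (emeasure lborel (I y)))" by (simp add: fun_eq_iff L_def measure_def)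
  ultimately show ?thesis by simp
qed

lemma Psi_meas[measurable]: "\<Psi> \<in> borel_measurable borel"
  unfolding \<Psi>_def[abs_def] by measurable

lemma massL: "(\<integral>\<^sup>+y. indicator {0<..<M} y * ennreal (L y) \<partial>lborel) = 1"
proof -
  have "(\<integral>\<^sup>+y. indicator {0<..<M} y * ennreal (L y) \<partial>lborel) = (\<integral>\<^sup>+y. indicator {0<..} y * emeasure lborel (I y) \<partial>lborel)"
  proof (rule nn_integral_cong)
    fix y :: real
    show "indicator {0<..<M} y * ennreal (L y) = indicator {0<..} y * emeasure lborel (I y)"
      using emeasure_I[of y] L_zero[of y] by (cases "0 < y"; cases "y < M") auto
  qed
  then show ?thesis using mass by simp
qed

lemma PsiInt: "(\<integral>\<^sup>+y. indicator {0<..<M} y * ennreal (\<Psi> y) \<partial>lborel) = 1"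
  "(\<integral>\<^sup>+y. indicator {0<..<M} y * ennreal (\<Psi> y ^ 3) \<partial>lborel) = ennreal (6*(1+s)^2/((1+2* s)*(1+3* s)*M^2))"
proof -
  note pi = psi_int[OF s_gt s_neg M_pos]
  have eqf: "\<Psi> = (\<lambda>y. (1+s) / ((-s) * (M * M powr s)) * (y powr s - M powr s))"
    by (simp add: fun_eq_iff \<Psi>_def \<kappa>_def)
  have nn: "\<And>x. x \<in> {0<..<M} \<Longrightarrow> 0 \<le> \<Psi> x" using Psi_pos by (simp add: less_imp_le)
  have nn3: "\<And>x. x \<in> {0<..<M} \<Longrightarrow> 0 \<le> \<Psi> x ^ 3" using Psi_pos by (simp add: less_imp_le)
  have h1: "(\<Psi> has_integral 1) {0<..<M}" using pi(1) eqf by simp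
  have h3: "((\<lambda>y. \<Psi> y ^ 3) has_integral (6*(1+s)^2/((1+2* s)*(1+3* s)*M^2))) {0<..<M}" using pi(2) eqf by simp
  have "(\<integral>\<^sup>+y. indicator {0<..<M} y * ennreal (\<Psi> y) \<partial>lborel) = (\<integral>\<^sup>+y. ennreal (indicator {0<..<M} y * \<Psi> y) \<partial>lborel)"
    by (intro nn_integral_cong) (auto simp: indicator_def)
  also have "\<dots> = 1" using nn_integral_has_integral_lebesgue[OF nn h1] by simp
  finally show "(\<integral>\<^sup>+y. indicator {0<..<M} y * ennreal (\<Psi> y) \<partial>lborel) = 1" .
  have "(\<integral>\<^sup>+y. indicator {0<..<M} y * ennreal (\<Psi> y ^ 3) \<partial>lborel) = (\<integral>\<^sup>+y. ennreal (indicator {0<..<M} y * \<Psi> y ^ 3) \<partial>lborel)"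
    by (intro nn_integral_cong) (auto simp: indicator_def)
  also have "\<dots> = ennreal (6*(1+s)^2/((1+2* s)*(1+3* s)*M^2))"
    using nn_integral_has_integral_lebesgue[OF nn3 h3] by simp
  finally show "(\<integral>\<^sup>+y. indicator {0<..<M} y * ennreal (\<Psi> y ^ 3) \<partial>lborel) = ennreal (6*(1+s)^2/((1+2* s)*(1+3* s)*M^2))" .
qed

lemma compare: "(\<integral>\<^sup>+y. indicator {0<..<M} y * ennreal (L y ^ 3) \<partial>lborel)
    \<le> (\<integral>\<^sup>+y. indicator {0<..<M} y * ennreal (\<Psi> y ^ 3) \<partial>lborel)"
proof (cases "\<exists>y0. 0 < y0 \<and> y0 < M \<and> L y0 < \<Psi> y0")
  case True
  define T where "T = {y. 0 < y \<and> y < M \<and> L y < \<Psi> y}"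
  define c where "c = Inf (L ` T)"
  have Tne: "T \<noteq> {}" using True by (auto simp: T_def)
  have c0: "0 \<le> c" unfolding c_def by (rule cInf_greatest) (use Tne L_nonneg in auto)
  have bddT: "bdd_below (L ` T)" by (rule bdd_belowI[where m=0]) (auto simp: L_nonneg)
  have cT: "c \<le> L y'" if "y' \<in> T" for y'
    unfolding c_def by (rule cInf_lower[OF _ bddT]) (use that in auto)
  have cS: "L y \<le> c" if y: "0 < y" "y < M" "\<Psi> y \<le> L y" for y
    unfolding c_def
  proof (rule cInf_greatest)
    show "L ` T \<noteq> {}" using Tne by simp
    fix v assume "v \<in> L ` T"
    then obtain y' where y': "y' \<in> T" "v = L y'" by auto
    have "y' < y"
    proof (rule ccontr)
      assume "\<not> y' < y"
      then have "y = y' \<or> y < y'" by auto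
      then show False
      proof
        assume "y = y'" then show False using y y' by (auto simp: T_def)
      next
        assume "y < y'"
        then have "\<Psi> y' \<le> L y'" using cone[of y y'] y y' by (auto simp: T_def)
        then show False using y' by (auto simp: T_def)
      qed
    qed
    then show "L y \<le> v" using L_anti[of y' y] y' by (auto simp: T_def)
  qed
  have pt: "Lv^3 + 3*c^2*P \<le> P^3 + 3*c^2*Lv"
    if h: "(0 \<le> P \<and> P \<le> Lv \<and> Lv \<le> c) \<or> (c \<le> Lv \<and> Lv < P)" for Lv P :: real
  proof -
    have id: "P^3 + 3*c^2*Lv - (Lv^3 + 3*c^2*P) = (P - Lv) * (Lv^2 + Lv*P + P^2 - 3*c^2)"
      by algebra
    have "0 \<le> (P - Lv) * (Lv^2 + Lv*P + P^2 - 3*c^2)"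
    proof (cases "0 \<le> P \<and> P \<le> Lv \<and> Lv \<le> c")
      case True
      then have "Lv^2 \<le> c^2" "Lv*P \<le> c*c" "P^2 \<le> c^2"
        by (auto intro!: power_mono mult_mono)
      then have "Lv^2 + Lv*P + P^2 - 3*c^2 \<le> 0" by (simp add: power2_eq_square)
      moreover have "P - Lv \<le> 0" using True by simp
      ultimately show ?thesis by (simp add: mult_nonpos_nonpos)
    next
      case False
      then have h2: "c \<le> Lv" "Lv < P" using h by auto
      then have "c^2 \<le> Lv^2" "c*c \<le> Lv*P" "c^2 \<le> P^2"
        using c0 by (auto intro!: power_mono mult_mono)
      then have "0 \<le> Lv^2 + Lv*P + P^2 - 3*c^2" by (simp add: power2_eq_square)
      moreover have "0 \<le> P - Lv" using h2 by simp
      ultimately show ?thesis by simp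
    qed
    then show ?thesis using id by simp
  qed
  define k where "k = ennreal (3*c^2)"
  have "(\<integral>\<^sup>+y. indicator {0<..<M} y * ennreal (L y ^ 3) + k * (indicator {0<..<M} y * ennreal (\<Psi> y)) \<partial>lborel)
      \<le> (\<integral>\<^sup>+y. indicator {0<..<M} y * ennreal (\<Psi> y ^ 3) + k * (indicator {0<..<M} y * ennreal (L y)) \<partial>lborel)"
  proof (rule nn_integral_mono)
    fix y :: real
    show "indicator {0<..<M} y * ennreal (L y ^ 3) + k * (indicator {0<..<M} y * ennreal (\<Psi> y))
        \<le> indicator {0<..<M} y * ennreal (\<Psi> y ^ 3) + k * (indicator {0<..<M} y * ennreal (L y))"
    proof (cases "0 < y \<and> y < M")
      case True
      have Pp: "0 < \<Psi> y" using Psi_pos True by simp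
      have "L y ^ 3 + 3*c^2*\<Psi> y \<le> \<Psi> y ^ 3 + 3*c^2*L y"
      proof (cases "\<Psi> y \<le> L y")
        case True2: True
        then show ?thesis using pt[of "\<Psi> y" "L y"] cS[of y] True Pp by auto
      next
        case False
        then have "y \<in> T" using True by (auto simp: T_def)
        then show ?thesis using pt[of "\<Psi> y" "L y"] cT[of y] False by auto
      qed
      then have "ennreal (L y ^ 3 + 3*c^2*\<Psi> y) \<le> ennreal (\<Psi> y ^ 3 + 3*c^2*L y)"
        by (rule ennreal_leI)
      then show ?thesis using True Pp L_nonneg[of y]
        by (simp add: k_def ennreal_plus[symmetric] ennreal_mult[symmetric] del: ennreal_plus)
    qed simp
  qed
  also have "(\<integral>\<^sup>+y. indicator {0<..<M} y * ennreal (\<Psi> y ^ 3) + k * (indicator {0<..<M} y * ennreal (L y)) \<partial>lborel)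
     = (\<integral>\<^sup>+y. indicator {0<..<M} y * ennreal (\<Psi> y ^ 3) \<partial>lborel) + k * 1"
    by (subst nn_integral_add) (auto simp: nn_integral_cmult massL)
  finally have "(\<integral>\<^sup>+y. indicator {0<..<M} y * ennreal (L y ^ 3) \<partial>lborel) + k
      \<le> (\<integral>\<^sup>+y. indicator {0<..<M} y * ennreal (\<Psi> y ^ 3) \<partial>lborel) + k"
    by (subst (asm) nn_integral_add) (auto simp: nn_integral_cmult PsiInt(1))
  then show ?thesis using ennreal_add_left_cancel_le[of k] by (simp add: k_def add.commute)
next
  case False
  have PL: "\<Psi> y \<le> L y" if "0 < y" "y < M" for y
  proof -
    have "\<not> (0 < y \<and> y < M \<and> L y < \<Psi> y)" using False by blast
    then show ?thesis using that by auto
  qed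
  have "(\<integral>\<^sup>+y. indicator {0<..<M} y * ennreal (L y) \<partial>lborel)
      = (\<integral>\<^sup>+y. indicator {0<..<M} y * ennreal (\<Psi> y) + indicator {0<..<M} y * ennreal (L y - \<Psi> y) \<partial>lborel)"
  proof (rule nn_integral_cong)
    fix y :: real
    show "indicator {0<..<M} y * ennreal (L y) = indicator {0<..<M} y * ennreal (\<Psi> y) + indicator {0<..<M} y * ennreal (L y - \<Psi> y)"
    proof (cases "0 < y \<and> y < M")
      case True
      then show ?thesis using PL[of y] Psi_pos[of y] by (simp add: ennreal_plus[symmetric] del: ennreal_plus)
    qed simp
  qed
  also have "\<dots> = 1 + (\<integral>\<^sup>+y. indicator {0<..<M} y * ennreal (L y - \<Psi> y) \<partial>lborel)"
    by (subst nn_integral_add) (auto simp: PsiInt(1))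
  finally have "1 + 0 = 1 + (\<integral>\<^sup>+y. indicator {0<..<M} y * ennreal (L y - \<Psi> y) \<partial>lborel)"
    using massL by simp
  then have "(\<integral>\<^sup>+y. indicator {0<..<M} y * ennreal (L y - \<Psi> y) \<partial>lborel) = 0"
    using ennreal_add_left_cancel[of 1] by simp
  then have "AE y in lborel. indicator {0<..<M} y * ennreal (L y - \<Psi> y) = 0"
    by (subst (asm) nn_integral_0_iff_AE) auto
  then have "AE y in lborel. indicator {0<..<M} y * ennreal (L y ^ 3) = indicator {0<..<M} y * ennreal (\<Psi> y ^ 3)"
  proof (rule eventually_mono)
    fix y assume h: "indicator {0<..<M} y * ennreal (L y - \<Psi> y) = 0"
    show "indicator {0<..<M} y * ennreal (L y ^ 3) = indicator {0<..<M} y * ennreal (\<Psi> y ^ 3)"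
    proof (cases "0 < y \<and> y < M")
      case True
      then have "L y = \<Psi> y" using h PL[of y] by (simp add: ennreal_eq_0_iff)
      then show ?thesis by simp
    qed simp
  qed
  then show ?thesis by (simp add: nn_integral_cong_AE)
qed

theorem sc_main:
  "(\<integral>\<^sup>+x. ennreal (f x * (x - cc)^2) \<partial>lborel) \<le> ennreal (2*(1+s)^2/((1+2* s)*(1+3* s)*M^2))"
proof -
  have "(\<integral>\<^sup>+x. ennreal (f x * (x - cc)^2) \<partial>lborel) = (\<integral>\<^sup>+x. ennreal (f x) * ennreal ((x - cc)^2) \<partial>lborel)"
    using f0 by (simp add: ennreal_mult)
  also have "\<dots> \<le> (\<integral>\<^sup>+y. indicator {0<..<M} y * ennreal (L y ^ 3 / 3) \<partial>lborel)" by (rule moment)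
  also have "\<dots> = (\<integral>\<^sup>+y. ennreal (1/3) * (indicator {0<..<M} y * ennreal (L y ^ 3)) \<partial>lborel)"
  proof (rule nn_integral_cong)
    fix x :: real
    have "ennreal (L x ^ 3 / 3) = ennreal (1/3) * ennreal (L x ^ 3)"
      using L_nonneg[of x] by (simp add: ennreal_mult[symmetric])
    then show "indicator {0<..<M} x * ennreal (L x ^ 3 / 3) = ennreal (1/3) * (indicator {0<..<M} x * ennreal (L x ^ 3))"
      by (simp add: ac_simps)
  qed
  also have "\<dots> = ennreal (1/3) * (\<integral>\<^sup>+y. indicator {0<..<M} y * ennreal (L y ^ 3) \<partial>lborel)"
    by (rule nn_integral_cmult) measurable
  also have "\<dots> \<le> ennreal (1/3) * ennreal (6*(1+s)^2/((1+2* s)*(1+3* s)*M^2))"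
    using compare PsiInt(2) by (simp add: mult_left_mono)
  also have "\<dots> = ennreal (2*(1+s)^2/((1+2* s)*(1+3* s)*M^2))"
    using s_gt by (simp add: ennreal_mult[symmetric])
  finally show ?thesis .
qed

end


lemma logconc_imp: assumes "s_concave 0 f" shows "s_concave (-1/10) f"
  unfolding s_concave_def
proof (intro conjI allI impI)
  show "\<And>x. 0 \<le> f x" using assms by (simp add: s_concave_def)
  fix x y \<theta> :: real assume th: "0 < \<theta> \<and> \<theta> < 1"
  have base: "s_mean 0 \<theta> (f x) (f y) \<le> f (\<theta> * x + (1 - \<theta>) * y)"
    using assms th by (simp add: s_concave_def)
  show "s_mean (-1/10) \<theta> (f x) (f y) \<le> f (\<theta> * x + (1 - \<theta>) * y)"
  proof (cases "f x = 0 \<or> f y = 0")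
    case True
    then show ?thesis using assms by (simp add: s_mean_def s_concave_def)
  next
    case False
    define t :: real where "t = -1/10"
    have fx: "f x > 0" "f y > 0" using False assms by (auto simp: s_concave_def order_le_less)
    define u where "u = f x powr t"
    define v where "v = f y powr t"
    have uv: "u > 0" "v > 0" using fx by (auto simp: u_def v_def)
    have "exp ((1 - (1-\<theta>)) *\<^sub>R ln u + (1-\<theta>) *\<^sub>R ln v) \<le> (1 - (1-\<theta>)) * exp (ln u) + (1-\<theta>) * exp (ln v)"
      using th by (intro convex_onD[OF exp_convex]) auto
    then have amgm: "exp (\<theta> * ln u + (1-\<theta>) * ln v) \<le> \<theta> * u + (1-\<theta>) * v" using uv by simp
    define G where "G = f x powr \<theta> * f y powr (1-\<theta>)"
    have G0: "G > 0" using fx by (simp add: G_def)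
    have "exp (\<theta> * ln u + (1-\<theta>) * ln v) = G powr t"
      using fx by (simp add: u_def v_def G_def powr_def exp_add ln_mult algebra_simps)
    with amgm have Gw: "G powr t \<le> \<theta> * u + (1-\<theta>) * v" by simp
    have "(\<theta> * u + (1-\<theta>) * v) powr (1/t) \<le> (G powr t) powr (1/t)"
      by (rule powr_mono2') (use Gw G0 in \<open>auto simp: t_def\<close>)
    also have "(G powr t) powr (1/t) = G" using G0 by (simp add: powr_powr t_def)
    finally have "s_mean (-1/10) \<theta> (f x) (f y) \<le> s_mean 0 \<theta> (f x) (f y)"
      using False by (simp add: s_mean_def u_def v_def G_def t_def)
    then show ?thesis using base by simp
  qed
qed

lemma dist_facts:
  fixes M :: "'a measure" and Z :: "'a \<Rightarrow> real" and f :: "real \<Rightarrow> real"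
  assumes P: "prob_space M" and f0: "\<forall>x. f x \<ge> 0" and D: "distributed M lborel Z (\<lambda>x. ennreal (f x))"
  shows "f \<in> borel_measurable borel" "(\<integral>\<^sup>+x. ennreal (f x) \<partial>lborel) = 1" "Z \<in> borel_measurable M"
    "\<And>c. (\<integral>\<^sup>+\<omega>. ennreal ((Z \<omega> - c)^2) \<partial>M) = (\<integral>\<^sup>+x. ennreal (f x * (x - c)^2) \<partial>lborel)"
proof -
  have "(\<lambda>x. ennreal (f x)) \<in> borel_measurable lborel" using distributed_borel_measurable[OF D] .
  then show fm: "f \<in> borel_measurable borel" using f0 by simp
  show "Z \<in> borel_measurable M" using distributed_measurable[OF D] by simp
  have "(\<integral>\<^sup>+x. ennreal (f x) * 1 \<partial>lborel) = (\<integral>\<^sup>+\<omega>. 1 \<partial>M)"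
    by (rule distributed_nn_integral[OF D]) simp
  also have "\<dots> = 1" using prob_space.emeasure_space_1[OF P] by simp
  finally show "(\<integral>\<^sup>+x. ennreal (f x) \<partial>lborel) = 1" by simp
  fix c :: real
  have "(\<integral>\<^sup>+x. ennreal (f x) * ennreal ((x - c)^2) \<partial>lborel) = (\<integral>\<^sup>+\<omega>. ennreal ((Z \<omega> - c)^2) \<partial>M)"
    by (rule distributed_nn_integral[OF D]) simp
  then show "(\<integral>\<^sup>+\<omega>. ennreal ((Z \<omega> - c)^2) \<partial>M) = (\<integral>\<^sup>+x. ennreal (f x * (x - c)^2) \<partial>lborel)"
    using f0 by (simp add: ennreal_mult)
qed

lemma var_facts:
  fixes M :: "'a measure" and Z :: "'a \<Rightarrow> real"
  assumes P: "prob_space M" and Zm[measurable]: "Z \<in> borel_measurable M" and I2: "integrable M (\<lambda>\<omega>. (Z \<omega>)^2)"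
  shows "integrable M (\<lambda>\<omega>. (Z \<omega> - c)^2)"
    "integral\<^sup>L M (\<lambda>\<omega>. (Z \<omega> - integral\<^sup>L M Z)^2) \<le> integral\<^sup>L M (\<lambda>\<omega>. (Z \<omega> - c)^2)"
    "(\<integral>\<^sup>+\<omega>. ennreal ((Z \<omega> - c)^2) \<partial>M) = ennreal (integral\<^sup>L M (\<lambda>\<omega>. (Z \<omega> - c)^2))"
proof -
  interpret prob_space M by (rule P)
  have IZ: "integrable M Z"
  proof (rule Bochner_Integration.integrable_bound[where f="\<lambda>\<omega>. 1 + (Z \<omega>)^2"])
    show "integrable M (\<lambda>\<omega>. 1 + (Z \<omega>)^2)" using I2 by simp
    show "AE \<omega> in M. norm (Z \<omega>) \<le> norm (1 + (Z \<omega>)^2)"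
    proof (rule AE_I2)
      fix \<omega>
      have "\<bar>Z \<omega>\<bar> \<le> 1 + (Z \<omega>)^2"
      proof (cases "\<bar>Z \<omega>\<bar> \<le> 1")
        case True then show ?thesis by (simp add: add_increasing2)
      next
        case False
        then have "1 * \<bar>Z \<omega>\<bar> \<le> \<bar>Z \<omega>\<bar> * \<bar>Z \<omega>\<bar>" by (intro mult_right_mono) auto
        then have "\<bar>Z \<omega>\<bar> \<le> (Z \<omega>)^2" by (simp add: power2_eq_square)
        then show ?thesis by simp
      qed
      then show "norm (Z \<omega>) \<le> norm (1 + (Z \<omega>)^2)" by simp
    qed
  qed simp
  have eq: "(\<lambda>\<omega>. (Z \<omega> - d)^2) = (\<lambda>\<omega>. (Z \<omega>)^2 - 2 * d * Z \<omega> + d^2)" for d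
    by (simp add: fun_eq_iff power2_eq_square algebra_simps)
  have Id: "integrable M (\<lambda>\<omega>. (Z \<omega> - d)^2)" for d
    unfolding eq using I2 IZ by simp
  show "integrable M (\<lambda>\<omega>. (Z \<omega> - c)^2)" by (rule Id)
  have val: "integral\<^sup>L M (\<lambda>\<omega>. (Z \<omega> - d)^2) = integral\<^sup>L M (\<lambda>\<omega>. (Z \<omega>)^2) - 2 * d * integral\<^sup>L M Z + d^2" for d
    unfolding eq using I2 IZ by (simp add: prob_space)
  define \<mu> where "\<mu> = integral\<^sup>L M Z"
  have "0 \<le> (\<mu> - c)^2" by simp
  then show "integral\<^sup>L M (\<lambda>\<omega>. (Z \<omega> - integral\<^sup>L M Z)^2) \<le> integral\<^sup>L M (\<lambda>\<omega>. (Z \<omega> - c)^2)"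
    unfolding \<mu>_def[symmetric] val by (simp add: power2_eq_square algebra_simps)
  show "(\<integral>\<^sup>+\<omega>. ennreal ((Z \<omega> - c)^2) \<partial>M) = ennreal (integral\<^sup>L M (\<lambda>\<omega>. (Z \<omega> - c)^2))"
    by (rule nn_integral_eq_integral[OF Id]) simp
qed


lemma const_le: fixes s :: real assumes "-1/3 < s" "s < 0"
  shows "2*(1+s)^2/((1+2* s)*(1+3* s)) \<le> 4 * (1 + s) ^ 3 / ((1 + 3 * s) * (1 + 2 * s)\<^sup>2)"
proof -
  have p: "0 < 1+s" "0 < 1+2* s" "0 < 1+3* s" using assms by auto
  have "2*(1+s)^2/((1+2* s)*(1+3* s)) * 1 \<le> 2*(1+s)^2/((1+2* s)*(1+3* s)) * (2*(1+s)/(1+2* s))"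
  proof (rule mult_left_mono)
    show "1 \<le> 2*(1+s)/(1+2* s)" using p by (simp add: field_simps)
    show "0 \<le> 2*(1+s)^2/((1+2* s)*(1+3* s))" using p by (intro divide_nonneg_pos) auto
  qed
  also have "\<dots> = 4 * (1 + s) ^ 3 / ((1 + 3 * s) * (1 + 2 * s)\<^sup>2)"
    using p by (simp add: field_simps power2_eq_square power3_eq_cube)
  finally show ?thesis by simp
qed

theorem proposition5:
  shows
  "(\<forall>(M :: 'a measure) (Z :: 'a \<Rightarrow> real) (f :: real \<Rightarrow> real).
      prob_space M \<longrightarrow> (\<forall>x. f x \<ge> 0) \<longrightarrow> distributed M lborel Z (\<lambda>x. ennreal (f x)) \<longrightarrow>
      integrable M (\<lambda>\<omega>. (Z \<omega>)\<^sup>2) \<longrightarrow>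
      ereal (1 / 12) \<le>
        ereal (integral\<^sup>L M (\<lambda>\<omega>. (Z \<omega> - integral\<^sup>L M Z)\<^sup>2)) * (esssup lborel (\<lambda>x. ereal (f x)))\<^sup>2)
   \<and>
   (\<forall>(M :: 'a measure) (Z :: 'a \<Rightarrow> real) (f :: real \<Rightarrow> real) (s :: real).
      prob_space M \<longrightarrow> -1/3 < s \<longrightarrow> s \<le> 0 \<longrightarrow> s_concave s f \<longrightarrow>
      distributed M lborel Z (\<lambda>x. ennreal (f x)) \<longrightarrow>
      integrable M (\<lambda>\<omega>. (Z \<omega>)\<^sup>2) \<and>
      ereal (1 / 12) \<le>
        ereal (integral\<^sup>L M (\<lambda>\<omega>. (Z \<omega> - integral\<^sup>L M Z)\<^sup>2)) * (esssup lborel (\<lambda>x. ereal (f x)))\<^sup>2 \<and>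
      ereal (integral\<^sup>L M (\<lambda>\<omega>. (Z \<omega> - integral\<^sup>L M Z)\<^sup>2)) * (esssup lborel (\<lambda>x. ereal (f x)))\<^sup>2
        \<le> ereal (4 * (1 + s) ^ 3 / ((1 + 3 * s) * (1 + 2 * s)\<^sup>2)))"
proof -
  have low: "ereal (1 / 12) \<le>
        ereal (integral\<^sup>L M (\<lambda>\<omega>. (Z \<omega> - integral\<^sup>L M Z)\<^sup>2)) * (esssup lborel (\<lambda>x. ereal (f x)))\<^sup>2"
    if P: "prob_space M" and f0: "\<forall>x. f x \<ge> 0" and D: "distributed M lborel Z (\<lambda>x. ennreal (f x))"
      and I2: "integrable M (\<lambda>\<omega>. (Z \<omega>)\<^sup>2)"
    for M :: "'a measure" and Z f
  proof -
    note df = dist_facts[OF P f0 D]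
    note vf = var_facts[OF P df(3) I2]
    define V where "V = integral\<^sup>L M (\<lambda>\<omega>. (Z \<omega> - integral\<^sup>L M Z)\<^sup>2)"
    have V0: "V \<ge> 0" unfolding V_def by simp
    have "(\<integral>\<^sup>+x. ennreal (f x * (x - integral\<^sup>L M Z)^2) \<partial>lborel) = ennreal V"
      using df(4)[of "integral\<^sup>L M Z"] vf(3)[of "integral\<^sup>L M Z"] by (simp add: V_def)
    from lower_bound_nn[OF _ df(1) df(2) this V0] f0 show ?thesis by (simp add: V_def)
  qed
  have up: "integrable Mm (\<lambda>\<omega>. (Z \<omega>)\<^sup>2) \<and>
      ereal (integral\<^sup>L Mm (\<lambda>\<omega>. (Z \<omega> - integral\<^sup>L Mm Z)\<^sup>2)) * (esssup lborel (\<lambda>x. ereal (f x)))\<^sup>2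
        \<le> ereal (4 * (1 + s) ^ 3 / ((1 + 3 * s) * (1 + 2 * s)\<^sup>2))"
    if P: "prob_space Mm" and s: "-1/3 < s" "s \<le> 0" and C: "s_concave s f"
      and D: "distributed Mm lborel Z (\<lambda>x. ennreal (f x))"
    for Mm :: "'a measure" and Z f s
  proof -
    have f0: "\<forall>x. f x \<ge> 0" using C by (simp add: s_concave_def)
    note df = dist_facts[OF P f0 D]
    define s' where "s' = (if s = 0 then -1/10 else s)"
    have s': "-1/3 < s'" "s' < 0" using s by (auto simp: s'_def)
    have C': "s_concave s' f" using C logconc_imp by (cases "s = 0") (auto simp: s'_def)
    interpret sc s' f by (unfold_locales) (use s' f0 df C' in auto)
    define B where "B = 2*(1+s')^2/((1+2* s')*(1+3* s'))"
    have BT: "B \<le> 4 * (1 + s) ^ 3 / ((1 + 3 * s) * (1 + 2 * s)\<^sup>2)"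
    proof (cases "s = 0")
      case True then show ?thesis by (simp add: B_def s'_def power2_eq_square)
    next
      case False then show ?thesis using const_le[OF s'] by (simp add: B_def s'_def)
    qed
    have B0: "B \<ge> 0" using s' by (simp add: B_def)
    have Mp: "M > 0" by (rule M_pos)
    have mainb: "(\<integral>\<^sup>+x. ennreal (f x * (x - cc)^2) \<partial>lborel) \<le> ennreal (B / M^2)"
      using sc_main by (simp add: B_def)
    have "(\<integral>\<^sup>+\<omega>. ennreal ((Z \<omega>)^2) \<partial>Mm) = (\<integral>\<^sup>+x. ennreal (f x * (x - 0)^2) \<partial>lborel)"
      using df(4)[of 0] by simp
    also have "\<dots> \<le> (\<integral>\<^sup>+x. 2 * ennreal (f x * (x - cc)^2) + ennreal (2 * cc^2) * ennreal (f x) \<partial>lborel)"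
    proof (rule nn_integral_mono)
      fix x :: real
      have "x^2 \<le> 2 * (x - cc)^2 + 2 * cc^2"
      proof -
        have "0 \<le> (x - 2*cc)^2" by simp
        then show ?thesis by (simp add: power2_eq_square algebra_simps)
      qed
      then have "f x * (x - 0)^2 \<le> 2 * (f x * (x - cc)^2) + (2 * cc^2) * f x"
        using f0 by (simp add: algebra_simps mult_left_mono[of "x^2" _ "f x", simplified] )
          (smt (verit) distrib_left mult.commute mult_left_mono)
      then have "ennreal (f x * (x - 0)^2) \<le> ennreal (2 * (f x * (x - cc)^2) + (2 * cc^2) * f x)"
        by (rule ennreal_leI)
      also have "\<dots> = 2 * ennreal (f x * (x - cc)^2) + ennreal (2 * cc^2) * ennreal (f x)"
        using f0 by (simp add: ennreal_plus ennreal_mult)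
      finally show "ennreal (f x * (x - 0)^2) \<le> 2 * ennreal (f x * (x - cc)^2) + ennreal (2 * cc^2) * ennreal (f x)" .
    qed
    also have "\<dots> = 2 * (\<integral>\<^sup>+x. ennreal (f x * (x - cc)^2) \<partial>lborel) + ennreal (2 * cc^2) * 1"
      using df by (subst nn_integral_add) (auto simp: nn_integral_cmult)
    also have "\<dots> < \<infinity>"
      using le_less_trans[OF mainb ennreal_less_top] by (simp add: ennreal_mult_less_top)
    finally have fin: "(\<integral>\<^sup>+\<omega>. ennreal ((Z \<omega>)^2) \<partial>Mm) < \<infinity>" .
    have I2: "integrable Mm (\<lambda>\<omega>. (Z \<omega>)\<^sup>2)"
      by (rule integrableI_bounded) (use df(3) fin in auto)
    note vf = var_facts[OF P df(3) I2]
    define V where "V = integral\<^sup>L Mm (\<lambda>\<omega>. (Z \<omega> - integral\<^sup>L Mm Z)\<^sup>2)"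
    have "ennreal (integral\<^sup>L Mm (\<lambda>\<omega>. (Z \<omega> - cc)^2)) \<le> ennreal (B / M^2)"
      using vf(3)[of cc] df(4)[of cc] mainb by simp
    then have "integral\<^sup>L Mm (\<lambda>\<omega>. (Z \<omega> - cc)^2) \<le> B / M^2"
      using B0 Mp by (subst (asm) ennreal_le_iff) auto
    then have "V \<le> B / M^2" using vf(2)[of cc] by (simp add: V_def)
    then have "V * M^2 \<le> B" using Mp by (simp add: field_simps)
    then have "ereal V * (ereal M)^2 \<le> ereal (4 * (1 + s) ^ 3 / ((1 + 3 * s) * (1 + 2 * s)\<^sup>2))"
      using BT by (simp add: power2_eq_square)
    moreover have "esssup lborel (\<lambda>x. ereal (f x)) = ereal M" using E_eq by (simp add: E_def)
    ultimately show ?thesis using I2 by (simp add: V_def)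
  qed
  show ?thesis
  proof (intro conjI allI impI)
    fix M :: "'a measure" and Z :: "'a \<Rightarrow> real" and f :: "real \<Rightarrow> real"
    assume "prob_space M" "\<forall>x. f x \<ge> 0" "distributed M lborel Z (\<lambda>x. ennreal (f x))" "integrable M (\<lambda>\<omega>. (Z \<omega>)\<^sup>2)"
    then show "ereal (1 / 12) \<le>
        ereal (integral\<^sup>L M (\<lambda>\<omega>. (Z \<omega> - integral\<^sup>L M Z)\<^sup>2)) * (esssup lborel (\<lambda>x. ereal (f x)))\<^sup>2"
      by (rule low)
  next
    fix M :: "'a measure" and Z :: "'a \<Rightarrow> real" and f :: "real \<Rightarrow> real" and s :: real
    assume h: "prob_space M" "-1/3 < s" "s \<le> 0" "s_concave s f" "distributed M lborel Z (\<lambda>x. ennreal (f x))"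
    note u = up[OF h]
    have f0: "\<forall>x. f x \<ge> 0" using h(4) by (simp add: s_concave_def)
    show "integrable M (\<lambda>\<omega>. (Z \<omega>)\<^sup>2)" using u by simp
    show "ereal (1 / 12) \<le>
        ereal (integral\<^sup>L M (\<lambda>\<omega>. (Z \<omega> - integral\<^sup>L M Z)\<^sup>2)) * (esssup lborel (\<lambda>x. ereal (f x)))\<^sup>2"
      using low[OF h(1) f0 h(5)] u by simp
    show "ereal (integral\<^sup>L M (\<lambda>\<omega>. (Z \<omega> - integral\<^sup>L M Z)\<^sup>2)) * (esssup lborel (\<lambda>x. ereal (f x)))\<^sup>2
        \<le> ereal (4 * (1 + s) ^ 3 / ((1 + 3 * s) * (1 + 2 * s)\<^sup>2))" using u by simp
  qed
qed

end
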